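(* Let $X$ be a compactum and $Z$ a paracompact space such that every compact subspace of $Z$ has finite Lebesgue covering dimension. Let $g\colon Y\to Z$ be a surjective map with the following property: for every $z\in Z$ and every neighborhood $U(z)$ of $z$ in $Z$ there is a neighborhood $V(z)\subset U(z)$ of $z$ such that $g^{-1}(V(z))\in AE(X)$. Then for every open cover $\omega$ of $Z$ and every map $f\colon X\to Z$ there exists a map $\tilde f\colon X\to Y$ such that $f$ and $g\circ\tilde f$ are $\omega$-close (i.e. for every $x\in X$ there is $W\in\omega$ containing both $f(x)$ and $g(\tilde f(x))$).
   Context: All spaces are Tychonoff and all maps continuous; a compactum is a compact Hausdorff space. For spaces $X,Y$, $Y\in AE(X)$ means every map $h\colon A\to Y$ defined on a closed subspace $A\subset X$ extends to a map $X\to Y$. *)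

theory Defs
  imports "HOL-Analysis.Analysis"
begin

definition tychonoff_space :: "'a topology \<Rightarrow> bool" where
  "tychonoff_space X \<longleftrightarrow> completely_regular_space X \<and> Hausdorff_space X"

definition paracompact_space :: "'a topology \<Rightarrow> bool" where
  "paracompact_space X \<longleftrightarrow> Hausdorff_space X \<and>
     (\<forall>\<U>. (\<forall>U\<in>\<U>. openin X U) \<and> \<Union>\<U> = topspace X \<longrightarrow>
        (\<exists>\<V>. (\<forall>V\<in>\<V>. openin X V) \<and> \<Union>\<V> = topspace X \<and>
             (\<forall>V\<in>\<V>. \<exists>U\<in>\<U>. V \<subseteq> U) \<and> locally_finite_in X \<V>))"

definition covering_dim_le :: "'a topology \<Rightarrow> nat \<Rightarrow> bool" where
  "covering_dim_le X n \<longleftrightarrow>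
     (\<forall>\<U>. finite \<U> \<and> (\<forall>U\<in>\<U>. openin X U) \<and> \<Union>\<U> = topspace X \<longrightarrow>
        (\<exists>\<V>. finite \<V> \<and> (\<forall>V\<in>\<V>. openin X V) \<and> \<Union>\<V> = topspace X \<and>
             (\<forall>V\<in>\<V>. \<exists>U\<in>\<U>. V \<subseteq> U) \<and>
             (\<forall>x\<in>topspace X. card {V\<in>\<V>. x \<in> V} \<le> Suc n)))"

definition finite_covering_dim :: "'a topology \<Rightarrow> bool" where
  "finite_covering_dim X \<longleftrightarrow> (\<exists>n. covering_dim_le X n)"

definition AE_for :: "'b topology \<Rightarrow> 'a topology \<Rightarrow> bool" where
  "AE_for Y X \<longleftrightarrow>
     (\<forall>A h. closedin X A \<and> continuous_map (subtopology X A) Y h \<longrightarrow>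
        (\<exists>k. continuous_map X Y k \<and> (\<forall>x\<in>A. k x = h x)))"

end

theory Submission
  imports Defs
begin


definition cpm :: "'c topology \<Rightarrow> ('c \<Rightarrow> 'c \<Rightarrow> real) \<Rightarrow> bool" where
  "cpm Z d \<longleftrightarrow> (\<forall>a b. d a b = d b a) \<and> (\<forall>a b c. d a c \<le> d a b + d b c) \<and> (\<forall>a. d a a = 0)
     \<and> (\<forall>a. continuous_map Z euclideanreal (d a))"

lemma cpm_nonneg: "cpm Z d \<Longrightarrow> d a b \<ge> 0"
  proof -
  assume "cpm Z d"
  then have "d a a \<le> d a b + d b a" "d b a = d a b" "d a a = 0" unfolding cpm_def by blast+
  then show ?thesis by linarith
qed

lemma cpm_ball_open: "cpm Z d \<Longrightarrow> openin Z {z \<in> topspace Z. d a z < e}"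
  unfolding cpm_def using openin_continuous_map_preimage[of Z euclideanreal "d a" "{..<e}"]
  by auto

lemma cpm_max: "cpm Z d1 \<Longrightarrow> cpm Z d2 \<Longrightarrow> cpm Z (\<lambda>a b. max (d1 a b) (d2 a b))"
  unfolding cpm_def
  apply (intro conjI allI)
     apply (metis)
    apply (simp add: max_def, smt (verit))
   apply simp
  by (simp add: continuous_map_real_max)

lemma cpm_zero: "cpm Z (\<lambda>a b. 0)"
  unfolding cpm_def by simp

lemma ball_lemma:
  assumes cr: "completely_regular_space Z" and K: "compactin Z K"
    and cov: "\<forall>z\<in>K. \<exists>G\<in>\<G>. z \<in> G" and op: "\<forall>G\<in>\<G>. openin Z G"
  shows "\<exists>d e. cpm Z d \<and> e > 0 \<and> (\<forall>a\<in>K. \<exists>G\<in>\<G>. \<forall>z\<in>topspace Z. d a z < e \<longrightarrow> z \<in> G)"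
proof -
  have "\<forall>z\<in>K. \<exists>G \<phi>. G \<in> \<G> \<and> z \<in> G \<and> continuous_map Z (top_of_set {0..1::real}) \<phi> \<and> \<phi> z = 0
          \<and> \<phi> ` (topspace Z - G) \<subseteq> {1}"
  proof
    fix z assume z: "z \<in> K"
    then obtain G where G: "G \<in> \<G>" "z \<in> G" using cov by blast
    have zt: "z \<in> topspace Z" using K z compactin_subset_topspace by blast
    have "closedin Z (topspace Z - G)" using op G by blast
    then obtain \<phi> where "continuous_map Z (top_of_set {0..1::real}) \<phi> \<and> \<phi> z = 0 \<and> \<phi> ` (topspace Z - G) \<subseteq> {1}"
      using cr zt G unfolding completely_regular_space_def by (metis DiffD2 DiffI)
    then show "\<exists>G \<phi>. G \<in> \<G> \<and> z \<in> G \<and> continuous_map Z (top_of_set {0..1::real}) \<phi> \<and> \<phi> z = 0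
          \<and> \<phi> ` (topspace Z - G) \<subseteq> {1}" using G by blast
  qed
  then obtain GG where "\<forall>z\<in>K. \<exists>\<phi>. GG z \<in> \<G> \<and> z \<in> GG z \<and> continuous_map Z (top_of_set {0..1::real}) \<phi> \<and> \<phi> z = 0
          \<and> \<phi> ` (topspace Z - GG z) \<subseteq> {1}" by (auto dest!: bchoice)
  then have "\<exists>\<Phi>. \<forall>z\<in>K. GG z \<in> \<G> \<and> z \<in> GG z \<and> continuous_map Z (top_of_set {0..1::real}) (\<Phi> z) \<and> \<Phi> z z = 0
          \<and> \<Phi> z ` (topspace Z - GG z) \<subseteq> {1}" by (rule bchoice)
  then obtain \<Phi> where GG: "\<And>z. z \<in> K \<Longrightarrow> GG z \<in> \<G> \<and> z \<in> GG z \<and> continuous_map Z (top_of_set {0..1::real}) (\<Phi> z) \<and> \<Phi> z z = 0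
          \<and> \<Phi> z ` (topspace Z - GG z) \<subseteq> {1}" by blast
  have contr: "continuous_map Z euclideanreal (\<Phi> z)" if "z \<in> K" for z
    using GG[OF that] continuous_map_in_subtopology by blast
  define Ob where "Ob z = {y \<in> topspace Z. \<Phi> z y < 1/2}" for z
  have "\<exists>\<F>. finite \<F> \<and> \<F> \<subseteq> Ob ` K \<and> K \<subseteq> \<Union>\<F>"
  proof (rule compactinD[OF K])
    show "openin Z U" if "U \<in> Ob ` K" for U
      using that contr openin_continuous_map_preimage[of Z euclideanreal _ "{..<1/2}"]
      unfolding Ob_def by auto
    show "K \<subseteq> \<Union> (Ob ` K)"
      using GG K compactin_subset_topspace unfolding Ob_def by fastforce
  qed
  then obtain C where C: "finite C" "C \<subseteq> K" "K \<subseteq> \<Union>(Ob ` C)"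
    by (metis finite_subset_image)
  define d where "d x y = (\<Sum>c\<in>C. \<bar>\<Phi> c x - \<Phi> c y\<bar>)" for x y
  have "cpm Z d"
    unfolding cpm_def
  proof (intro conjI allI)
    show "d a b = d b a" for a b unfolding d_def by (simp add: abs_minus_commute)
    show "d a c \<le> d a b + d b c" for a b c unfolding d_def
      by (simp add: sum.distrib[symmetric] sum_mono abs_triangle_ineq[THEN order_trans] )
    show "d a a = 0" for a unfolding d_def by simp
    show "continuous_map Z euclideanreal (d a)" for a unfolding d_def
      using C contr by (intro continuous_map_sum continuous_map_real_abs continuous_map_diff continuous_map_const[THEN iffD2]) auto
  qed
  moreover have "\<forall>a\<in>K. \<exists>G\<in>\<G>. \<forall>z\<in>topspace Z. d a z < 1/2 \<longrightarrow> z \<in> G"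
  proof
    fix a assume a: "a \<in> K"
    then obtain c where c: "c \<in> C" "a \<in> Ob c" using C by blast
    show "\<exists>G\<in>\<G>. \<forall>z\<in>topspace Z. d a z < 1/2 \<longrightarrow> z \<in> G"
    proof (intro bexI ballI impI)
      fix z assume z: "z \<in> topspace Z" "d a z < 1/2"
      have "\<bar>\<Phi> c a - \<Phi> c z\<bar> \<le> d a z" unfolding d_def
        using C c by (intro member_le_sum) auto
      then have "\<Phi> c z < 1" using c z unfolding Ob_def by auto
      then show "z \<in> GG c" using GG[of c] C c z by fastforce
    next
      show "GG c \<in> \<G>" using GG C c by blast
    qed
  qed
  ultimately show ?thesis by (intro exI[of _ d] exI[of _ "1/2"]) auto
qed



lemma data_lemma:
  fixes L :: nat
  assumes cr: "completely_regular_space Z" and K: "compactin Z K"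
    and good: "\<And>z U. z \<in> K \<Longrightarrow> openin Z U \<Longrightarrow> z \<in> U \<Longrightarrow> \<exists>V. P V \<and> openin Z V \<and> z \<in> V \<and> V \<subseteq> U"
    and om: "\<forall>z\<in>K. \<exists>W\<in>\<omega>. z \<in> W" "\<forall>W\<in>\<omega>. openin Z W"
  shows "\<exists>d e G. cpm Z d \<and> e > 0 \<and>
     (\<forall>r<L. \<forall>a\<in>K. P (G r a) \<and> openin Z (G r a) \<and> (\<exists>W\<in>\<omega>. G r a \<subseteq> W) \<and>
        (\<forall>z\<in>topspace Z. d a z < e \<longrightarrow> z \<in> G r a)) \<and>
     (\<forall>r r' a a'. r' < r \<and> r < L \<and> a \<in> K \<and> a' \<in> K \<and> d a a' < e \<longrightarrow> G r' a' \<subseteq> G r a)"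
proof (induction L)
  case 0
  show ?case by (intro exI[of _ "\<lambda>a b. 0"] exI[of _ 1]) (auto simp: cpm_zero)
next
  case (Suc L)
  then obtain d e G where dpm: "cpm Z d" and e: "e > 0"
    and G1: "\<forall>r<L. \<forall>a\<in>K. P (G r a) \<and> openin Z (G r a) \<and> (\<exists>W\<in>\<omega>. G r a \<subseteq> W) \<and>
        (\<forall>z\<in>topspace Z. d a z < e \<longrightarrow> z \<in> G r a)"
    and G2: "\<forall>r r' a a'. r' < r \<and> r < L \<and> a \<in> K \<and> a' \<in> K \<and> d a a' < e \<longrightarrow> G r' a' \<subseteq> G r a"
    by blast
  have Kt: "K \<subseteq> topspace Z" using K compactin_subset_topspace by blast
  define \<G> where "\<G> = {V. P V \<and> openin Z V \<and> (\<exists>W\<in>\<omega>. V \<subseteq> W) \<and> (\<exists>c. V \<subseteq> {z\<in>topspace Z. d c z < e/4})}"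
  have "\<exists>d0 e0. cpm Z d0 \<and> e0 > 0 \<and> (\<forall>a\<in>K. \<exists>G\<in>\<G>. \<forall>z\<in>topspace Z. d0 a z < e0 \<longrightarrow> z \<in> G)"
  proof (rule ball_lemma[OF cr K])
    show "\<forall>G\<in>\<G>. openin Z G" unfolding \<G>_def by blast
    show "\<forall>z\<in>K. \<exists>G\<in>\<G>. z \<in> G"
    proof
      fix z assume z: "z \<in> K"
      then obtain W where W: "W \<in> \<omega>" "z \<in> W" using om by blast
      let ?U = "W \<inter> {y\<in>topspace Z. d z y < e/4}"
      have "openin Z ?U" using om W cpm_ball_open[OF dpm] by blast
      moreover have "z \<in> ?U" using W z Kt e dpm unfolding cpm_def by auto
      ultimately obtain V where "P V" "openin Z V" "z \<in> V" "V \<subseteq> ?U" using good z by blast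
      then have "V \<in> \<G>" using W unfolding \<G>_def by blast
      then show "\<exists>G\<in>\<G>. z \<in> G" using \<open>z \<in> V\<close> by blast
    qed
  qed
  then obtain d0 e0 where d0pm: "cpm Z d0" and e0: "e0 > 0"
    and B0: "\<forall>a\<in>K. \<exists>G\<in>\<G>. \<forall>z\<in>topspace Z. d0 a z < e0 \<longrightarrow> z \<in> G" by blast
  then obtain G0 where G0: "\<And>a. a \<in> K \<Longrightarrow> G0 a \<in> \<G> \<and> (\<forall>z\<in>topspace Z. d0 a z < e0 \<longrightarrow> z \<in> G0 a)"
    by metis
  define d' where "d' a b = max (d a b) (d0 a b)" for a b
  define e' where "e' = min (e/2) e0"
  define G' where "G' r a = (if r = 0 then G0 a else G (r - 1) a)" for r a
  have d'pm: "cpm Z d'" unfolding d'_def using cpm_max[OF dpm d0pm] .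
  have e'pos: "e' > 0" unfolding e'_def using e e0 by simp
  have dd: "d a b \<le> d' a b" "d0 a b \<le> d' a b" for a b unfolding d'_def by auto
  have ee: "e' \<le> e/2" "e' \<le> e0" unfolding e'_def by auto
  have P1: "\<forall>r<Suc L. \<forall>a\<in>K. P (G' r a) \<and> openin Z (G' r a) \<and> (\<exists>W\<in>\<omega>. G' r a \<subseteq> W) \<and>
        (\<forall>z\<in>topspace Z. d' a z < e' \<longrightarrow> z \<in> G' r a)"
  proof (intro allI impI ballI)
    fix r a assume r: "r < Suc L" and a: "a \<in> K"
    show "P (G' r a) \<and> openin Z (G' r a) \<and> (\<exists>W\<in>\<omega>. G' r a \<subseteq> W) \<and>
        (\<forall>z\<in>topspace Z. d' a z < e' \<longrightarrow> z \<in> G' r a)"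
    proof (cases "r = 0")
      case True
      have g0: "P (G0 a) \<and> openin Z (G0 a) \<and> (\<exists>W\<in>\<omega>. G0 a \<subseteq> W)"
        using G0[OF a] unfolding \<G>_def by blast
      have "\<forall>z\<in>topspace Z. d' a z < e' \<longrightarrow> z \<in> G0 a"
      proof (intro ballI impI)
        fix z assume "z \<in> topspace Z" "d' a z < e'"
        moreover have "d0 a z < e0" using dd[of a z] ee \<open>d' a z < e'\<close> by linarith
        ultimately show "z \<in> G0 a" using G0[OF a] by blast
      qed
      then show ?thesis using g0 True unfolding G'_def by simp
    next
      case False
      then have "r - 1 < L" using r by simp
      then have g1: "P (G (r-1) a) \<and> openin Z (G (r-1) a) \<and> (\<exists>W\<in>\<omega>. G (r-1) a \<subseteq> W) \<and>
        (\<forall>z\<in>topspace Z. d a z < e \<longrightarrow> z \<in> G (r-1) a)" using G1 a by blast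
      have "\<forall>z\<in>topspace Z. d' a z < e' \<longrightarrow> z \<in> G (r-1) a"
      proof (intro ballI impI)
        fix z assume "z \<in> topspace Z" "d' a z < e'"
        moreover have "d a z < e" using dd[of a z] ee e \<open>d' a z < e'\<close> by linarith
        ultimately show "z \<in> G (r-1) a" using g1 by blast
      qed
      then show ?thesis using g1 False unfolding G'_def by simp
    qed
  qed
  have P2: "\<forall>r r' a a'. r' < r \<and> r < Suc L \<and> a \<in> K \<and> a' \<in> K \<and> d' a a' < e' \<longrightarrow> G' r' a' \<subseteq> G' r a"
  proof (intro allI impI)
    fix r r' a a' assume H: "r' < r \<and> r < Suc L \<and> a \<in> K \<and> a' \<in> K \<and> d' a a' < e'"
    then have r: "r \<noteq> 0" "r - 1 < L" by auto
    have daa: "d a a' < e/2" using H dd ee by (smt (verit))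
    show "G' r' a' \<subseteq> G' r a"
    proof (cases "r' = 0")
      case True
      show ?thesis
      proof
        fix z assume z: "z \<in> G' r' a'"
        then have zG: "z \<in> G0 a'" using True unfolding G'_def by simp
        obtain c where c: "G0 a' \<subseteq> {z\<in>topspace Z. d c z < e/4}" "openin Z (G0 a')"
          using G0 H unfolding \<G>_def by blast
        have a'in: "a' \<in> G0 a'" using G0 H Kt e0 d0pm unfolding cpm_def by auto
        have "d c a' < e/4" "d c z < e/4" "z \<in> topspace Z" using c a'in zG by auto
        moreover have "d a z \<le> d a a' + d a' c + d c z" "d a' c = d c a'"
          using dpm unfolding cpm_def by (metis add_mono order_refl order_trans)+
        ultimately have "d a z < e" using daa by linarith
        then show "z \<in> G' r a" using G1 r H \<open>z \<in> topspace Z\<close> unfolding G'_def by auto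
      qed
    next
      case False
      have "r' - 1 < r - 1" using H False by linarith
      moreover have "d a a' < e" using daa e by linarith
      ultimately have "G (r' - 1) a' \<subseteq> G (r - 1) a" using G2 H r by blast
      then show ?thesis using False r unfolding G'_def by simp
    qed
  qed
  show ?case using d'pm e'pos P1 P2 by blast
qed



lemma extension_lemma:
  fixes X :: "'a topology" and Y :: "'b topology" and g :: "'b \<Rightarrow> 'c"
    and A :: "'i \<Rightarrow> 'a set" and V :: "'i \<Rightarrow> 'c set" and lev :: "'i \<Rightarrow> nat"
  assumes fin: "finite I"
    and cl: "\<forall>i\<in>I. closedin X (A i)"
    and cov: "topspace X \<subseteq> (\<Union>i\<in>I. A i)"
    and AE: "\<forall>i\<in>I. AE_for (subtopology Y {y \<in> topspace Y. g y \<in> V i}) X"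
    and mono: "\<forall>i\<in>I. \<forall>j\<in>I. lev i < lev j \<and> A i \<inter> A j \<noteq> {} \<longrightarrow> V i \<subseteq> V j"
    and disj: "\<forall>i\<in>I. \<forall>j\<in>I. lev i = lev j \<and> i \<noteq> j \<longrightarrow> A i \<inter> A j = {}"
  shows "\<exists>h. continuous_map X Y h \<and> (\<forall>x\<in>topspace X. \<exists>i\<in>I. x \<in> A i \<and> g (h x) \<in> V i)"
proof -
  define B where "B k = (\<Union>i\<in>{i\<in>I. lev i < k}. A i)" for k
  have Bcl: "closedin X (B k)" for k
    unfolding B_def using fin cl by (intro closedin_Union) auto
  have claim: "\<exists>h. continuous_map (subtopology X (B k)) Y h \<and>
      (\<forall>x\<in>topspace X \<inter> B k. \<exists>i\<in>I. lev i < k \<and> x \<in> A i \<and> g (h x) \<in> V i)" for k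
  proof (induction k)
    case 0
    have "B 0 = {}" unfolding B_def by simp
    then show ?case by simp
  next
    case (Suc k)
    then obtain h where hc: "continuous_map (subtopology X (B k)) Y h"
      and hi: "\<forall>x\<in>topspace X \<inter> B k. \<exists>i\<in>I. lev i < k \<and> x \<in> A i \<and> g (h x) \<in> V i" by blast
    define J where "J = {j\<in>I. lev j = k}"
    have "\<forall>j\<in>J. \<exists>kk. continuous_map X (subtopology Y {y \<in> topspace Y. g y \<in> V j}) kk \<and>
                 (\<forall>x\<in>B k \<inter> A j. kk x = h x)"
    proof
      fix j assume j: "j \<in> J"
      then have jI: "j \<in> I" unfolding J_def by simp
      have clC: "closedin X (B k \<inter> A j)" using Bcl cl jI by blast
      have hc': "continuous_map (subtopology X (B k \<inter> A j)) Y h"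
        using hc continuous_map_from_subtopology_mono by blast
      have "h \<in> topspace (subtopology X (B k \<inter> A j)) \<rightarrow> {y \<in> topspace Y. g y \<in> V j}"
      proof
        fix x assume x: "x \<in> topspace (subtopology X (B k \<inter> A j))"
        then have "x \<in> topspace X \<inter> B k" "x \<in> A j" by auto
        then obtain i where i: "i \<in> I" "lev i < k" "x \<in> A i" "g (h x) \<in> V i" using hi by blast
        have "V i \<subseteq> V j" using mono i jI j \<open>x \<in> A j\<close> unfolding J_def by blast
        moreover have "h x \<in> topspace Y" using continuous_map_image_subset_topspace[OF hc'] x by blast
        ultimately show "h x \<in> {y \<in> topspace Y. g y \<in> V j}" using i by blast
      qed
      then have "continuous_map (subtopology X (B k \<inter> A j)) (subtopology Y {y \<in> topspace Y. g y \<in> V j}) h"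
        using hc' continuous_map_in_subtopology by blast
      then show "\<exists>kk. continuous_map X (subtopology Y {y \<in> topspace Y. g y \<in> V j}) kk \<and>
                 (\<forall>x\<in>B k \<inter> A j. kk x = h x)"
        using AE jI clC unfolding AE_for_def by blast
    qed
    then obtain kk where kk: "\<And>j. j \<in> J \<Longrightarrow> continuous_map X (subtopology Y {y \<in> topspace Y. g y \<in> V j}) (kk j) \<and>
                 (\<forall>x\<in>B k \<inter> A j. kk j x = h x)" by (rule bchoice[THEN exE]) blast
    define T where "T i = (case i of None \<Rightarrow> B k | Some j \<Rightarrow> A j)" for i
    define F where "F i = (case i of None \<Rightarrow> h | Some j \<Rightarrow> kk j)" for i
    have BS: "B (Suc k) = B k \<union> (\<Union>j\<in>J. A j)" unfolding B_def J_def
      by (auto simp: less_Suc_eq)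
    have TS: "T i \<subseteq> B (Suc k)" if "i \<in> insert None (Some ` J)" for i
      using that BS unfolding T_def by auto
    obtain h' where h'c: "continuous_map (subtopology X (B (Suc k))) Y h'"
      and h'e: "\<And>x i. \<lbrakk>i \<in> insert None (Some ` J); x \<in> topspace (subtopology X (B (Suc k))) \<inter> T i\<rbrakk> \<Longrightarrow> h' x = F i x"
    proof (rule pasting_lemma_exists_closed[of "insert None (Some ` J)" "subtopology X (B (Suc k))" T Y F])
      show "finite (insert None (Some ` J))" using fin unfolding J_def by simp
      show "topspace (subtopology X (B (Suc k))) \<subseteq> \<Union> (T ` insert None (Some ` J))"
        using BS unfolding T_def by auto
      show "closedin (subtopology X (B (Suc k))) (T i)" if "i \<in> insert None (Some ` J)" for i
      proof -
        have "closedin X (T i)" using that Bcl cl unfolding T_def J_def by auto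
        then show ?thesis using TS[OF that] closedin_subset_topspace by blast
      qed
      show "continuous_map (subtopology (subtopology X (B (Suc k))) (T i)) Y (F i)"
        if "i \<in> insert None (Some ` J)" for i
      proof -
        have eq: "subtopology (subtopology X (B (Suc k))) (T i) = subtopology X (T i)"
          using TS[OF that] by (simp add: subtopology_subtopology Int_absorb1)
        show ?thesis
        proof (cases i)
          case None
          then show ?thesis using eq hc unfolding T_def F_def by simp
        next
          case (Some j)
          then have "j \<in> J" using that by auto
          then have "continuous_map X Y (kk j)" using kk[of j] continuous_map_into_fulltopology by blast
          then show ?thesis using eq Some unfolding T_def F_def
            by (simp add: continuous_map_from_subtopology)
        qed
      qed
      show "F i x = F j x" if "i \<in> insert None (Some ` J)" "j \<in> insert None (Some ` J)"
          "x \<in> topspace (subtopology X (B (Suc k))) \<inter> T i \<inter> T j" for i j x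
      proof (cases i; cases j)
        fix a b assume ij: "i = Some a" "j = Some b"
        then have "a \<in> J" "b \<in> J" using that by auto
        then have "a = b" using disj that ij unfolding T_def J_def by auto
        then show ?thesis using ij by simp
      next
        fix a assume ij: "i = Some a" "j = None"
        then have "a \<in> J" using that by auto
        then show ?thesis using kk[of a] that ij unfolding T_def F_def by auto
      next
        fix a assume ij: "i = None" "j = Some a"
        then have "a \<in> J" using that by auto
        then show ?thesis using kk[of a] that ij unfolding T_def F_def by auto
      qed simp
    qed blast
    have "\<forall>x\<in>topspace X \<inter> B (Suc k). \<exists>i\<in>I. lev i < Suc k \<and> x \<in> A i \<and> g (h' x) \<in> V i"
    proof
      fix x assume x: "x \<in> topspace X \<inter> B (Suc k)"
      show "\<exists>i\<in>I. lev i < Suc k \<and> x \<in> A i \<and> g (h' x) \<in> V i"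
      proof (cases "x \<in> B k")
        case True
        then have "h' x = h x" using h'e[of None x] x unfolding T_def F_def by auto
        then show ?thesis using hi x True by (metis IntI IntD1 less_SucI)
      next
        case False
        then obtain j where j: "j \<in> J" "x \<in> A j" using x BS by auto
        then have "h' x = kk j x" using h'e[of "Some j" x] x unfolding T_def F_def by auto
        moreover have "kk j x \<in> {y \<in> topspace Y. g y \<in> V j}"
          using continuous_map_image_subset_topspace[OF kk[OF j(1), THEN conjunct1]] x by auto
        ultimately show ?thesis using j unfolding J_def by auto
      qed
    qed
    then show ?case using h'c by blast
  qed
  define k where "k = Suc (\<Sum>i\<in>I. lev i)"
  have "topspace X \<subseteq> B k"
  proof
    fix x assume "x \<in> topspace X"
    then obtain i where "i \<in> I" "x \<in> A i" using cov by blast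
    moreover have "lev i < k" unfolding k_def using fin \<open>i \<in> I\<close> by (simp add: le_imp_less_Suc member_le_sum)
    ultimately show "x \<in> B k" unfolding B_def by blast
  qed
  then show ?thesis using claim[of k] subtopology_superset[of X "B k"] by (metis Int_absorb2)
qed



lemma pigeon:
  fixes \<phi> :: "'v \<Rightarrow> real" and n :: nat
  assumes fin: "finite S" and rng: "\<forall>v\<in>S. 0 \<le> \<phi> v \<and> \<phi> v \<le> 1"
    and crd: "card {v\<in>S. \<phi> v > 0} \<le> Suc n" and one: "v0 \<in> S" "\<phi> v0 = 1"
  shows "\<exists>r\<in>{1..Suc n}. \<exists>\<sigma>. \<sigma> \<subseteq> S \<and> \<sigma> \<noteq> {} \<and> (\<forall>v\<in>\<sigma>. \<phi> v \<ge> (real r + 1) / (real n + 2))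
            \<and> (\<forall>v\<in>S-\<sigma>. \<phi> v \<le> real r / (real n + 2))"
proof -
  define M where "M = {v\<in>S. 0 < \<phi> v \<and> \<phi> v < 1}"
  have "M \<subseteq> {v\<in>S. \<phi> v > 0} - {v0}" unfolding M_def using one by auto
  moreover have "card ({v\<in>S. \<phi> v > 0} - {v0}) \<le> n"
    using crd one fin by (simp add: card_Diff_singleton)
  moreover have "finite ({v\<in>S. \<phi> v > 0} - {v0})" using fin by simp
  ultimately have cM: "card M \<le> n" using card_mono order_trans by blast
  have fM: "finite M" unfolding M_def using fin by simp
  define fl where "fl v = nat \<lfloor>\<phi> v * (real n + 2)\<rfloor>" for v
  have "card (fl ` M) \<le> n" using card_image_le[OF fM, of fl] cM by linarith
  then have "\<not> {1..Suc n} \<subseteq> fl ` M"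
    using card_mono[OF finite_imageI[OF fM], of "{1..Suc n}"] by fastforce
  then obtain r where r: "r \<in> {1..Suc n}" "r \<notin> fl ` M" by blast
  define \<sigma> where "\<sigma> = {v\<in>S. \<phi> v \<ge> (real r + 1) / (real n + 2)}"
  have npos: "real n + 2 > 0" by simp
  have "(real r + 1) / (real n + 2) \<le> 1" using r npos by (simp add: divide_le_eq)
  then have "v0 \<in> \<sigma>" unfolding \<sigma>_def using one by simp
  moreover have "\<forall>v\<in>S-\<sigma>. \<phi> v \<le> real r / (real n + 2)"
  proof
    fix v assume v: "v \<in> S - \<sigma>"
    then have lt: "\<phi> v < (real r + 1) / (real n + 2)" unfolding \<sigma>_def by auto
    show "\<phi> v \<le> real r / (real n + 2)"
    proof (rule ccontr)
      assume "\<not> ?thesis"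
      then have gt: "\<phi> v > real r / (real n + 2)" by simp
      have "real r / (real n + 2) > 0" using r by simp
      then have "\<phi> v > 0" using gt by linarith
      moreover have "\<phi> v < 1" using lt \<open>(real r + 1) / (real n + 2) \<le> 1\<close> by linarith
      ultimately have vM: "v \<in> M" unfolding M_def using v by auto
      have a: "real r < \<phi> v * (real n + 2)" using gt npos by (simp add: divide_less_eq)
      have b: "\<phi> v * (real n + 2) < real r + 1" using lt npos by (simp add: less_divide_eq)
      have "\<lfloor>\<phi> v * (real n + 2)\<rfloor> = int r" using a b by (simp add: floor_eq_iff)
      then have "fl v = r" unfolding fl_def by simp
      then show False using r vM by blast
    qed
  qed
  moreover have "\<sigma> \<subseteq> S" "\<forall>v\<in>\<sigma>. \<phi> v \<ge> (real r + 1) / (real n + 2)" unfolding \<sigma>_def by auto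
  ultimately show ?thesis using r by (intro bexI[of _ r] exI[of _ \<sigma>]) auto
qed

lemma phi_lemma:
  fixes X :: "'a topology" and Q :: "'v \<Rightarrow> 'a set"
  assumes crX: "completely_regular_space X" and cX: "compact_space X"
    and fin: "finite \<V>" and op: "\<forall>V\<in>\<V>. openin X (Q V)" and cov: "topspace X \<subseteq> (\<Union>V\<in>\<V>. Q V)"
  shows "\<exists>\<Phi>. (\<forall>V\<in>\<V>. continuous_map X euclideanreal (\<Phi> V) \<and>
            (\<forall>x\<in>topspace X. 0 \<le> \<Phi> V x \<and> \<Phi> V x \<le> 1 \<and> (\<Phi> V x > 0 \<longrightarrow> x \<in> Q V))) \<and>
          (\<forall>x\<in>topspace X. \<exists>V\<in>\<V>. \<Phi> V x = 1)"
proof -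
  have "\<forall>x\<in>topspace X. \<exists>V \<psi>. V \<in> \<V> \<and> x \<in> Q V \<and> continuous_map X (top_of_set {0..1::real}) \<psi> \<and> \<psi> x = 0
          \<and> \<psi> ` (topspace X - Q V) \<subseteq> {1}"
  proof
    fix x assume x: "x \<in> topspace X"
    then obtain V where V: "V \<in> \<V>" "x \<in> Q V" using cov by blast
    have "closedin X (topspace X - Q V)" using op V by blast
    then obtain \<psi> where "continuous_map X (top_of_set {0..1::real}) \<psi> \<and> \<psi> x = 0 \<and> \<psi> ` (topspace X - Q V) \<subseteq> {1}"
      using crX x V unfolding completely_regular_space_def by (metis DiffD2 DiffI)
    then show "\<exists>V \<psi>. V \<in> \<V> \<and> x \<in> Q V \<and> continuous_map X (top_of_set {0..1::real}) \<psi> \<and> \<psi> x = 0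
          \<and> \<psi> ` (topspace X - Q V) \<subseteq> {1}" using V by blast
  qed
  then obtain VV where "\<forall>x\<in>topspace X. \<exists>\<psi>. VV x \<in> \<V> \<and> x \<in> Q (VV x) \<and> continuous_map X (top_of_set {0..1::real}) \<psi> \<and> \<psi> x = 0
          \<and> \<psi> ` (topspace X - Q (VV x)) \<subseteq> {1}" by (auto dest!: bchoice)
  then have "\<exists>\<Psi>. \<forall>x\<in>topspace X. VV x \<in> \<V> \<and> x \<in> Q (VV x) \<and> continuous_map X (top_of_set {0..1::real}) (\<Psi> x) \<and> \<Psi> x x = 0
          \<and> \<Psi> x ` (topspace X - Q (VV x)) \<subseteq> {1}" by (rule bchoice)
  then obtain \<Psi> where PS: "\<And>x. x \<in> topspace X \<Longrightarrow> VV x \<in> \<V> \<and> x \<in> Q (VV x) \<and> continuous_map X (top_of_set {0..1::real}) (\<Psi> x) \<and> \<Psi> x x = 0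
          \<and> \<Psi> x ` (topspace X - Q (VV x)) \<subseteq> {1}" by blast
  have contr: "continuous_map X euclideanreal (\<Psi> p)" if "p \<in> topspace X" for p
    using PS[OF that] continuous_map_in_subtopology by blast
  have rng: "0 \<le> \<Psi> p y \<and> \<Psi> p y \<le> 1" if "p \<in> topspace X" "y \<in> topspace X" for p y
  proof -
    have "\<Psi> p y \<in> {0..1}" using PS[OF that(1)] that(2)
      by (metis continuous_map_image_subset_topspace image_subset_iff topspace_euclidean_subtopology)
    then show ?thesis by simp
  qed
  define Ob where "Ob p = {y \<in> topspace X. \<Psi> p y < 1/2}" for p
  have "\<exists>\<F>. finite \<F> \<and> \<F> \<subseteq> Ob ` topspace X \<and> topspace X \<subseteq> \<Union>\<F>"
  proof (rule compactinD)
    show "compactin X (topspace X)" using cX compact_space_def by blast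
    show "openin X U" if "U \<in> Ob ` topspace X" for U
      using that contr openin_continuous_map_preimage[of X euclideanreal _ "{..<1/2}"]
      unfolding Ob_def by auto
    show "topspace X \<subseteq> \<Union> (Ob ` topspace X)"
      using PS unfolding Ob_def by fastforce
  qed
  then obtain C where C: "finite C" "C \<subseteq> topspace X" "topspace X \<subseteq> \<Union>(Ob ` C)"
    by (metis finite_subset_image)
  define \<Phi> where "\<Phi> V x = min 1 (2 * (\<Sum>p\<in>{p\<in>C. VV p = V}. 1 - \<Psi> p x))" for V x
  have "\<forall>V\<in>\<V>. continuous_map X euclideanreal (\<Phi> V) \<and>
            (\<forall>x\<in>topspace X. 0 \<le> \<Phi> V x \<and> \<Phi> V x \<le> 1 \<and> (\<Phi> V x > 0 \<longrightarrow> x \<in> Q V))"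
  proof (intro ballI conjI impI)
    fix V assume V: "V \<in> \<V>"
    show "continuous_map X euclideanreal (\<Phi> V)" unfolding \<Phi>_def
      using C contr
      by (intro continuous_map_real_min continuous_map_real_mult continuous_map_sum continuous_map_diff)
         (auto simp: continuous_map_const)
    fix x assume x: "x \<in> topspace X"
    have s0: "0 \<le> (\<Sum>p\<in>{p\<in>C. VV p = V}. 1 - \<Psi> p x)"
      using C rng x by (intro sum_nonneg) auto
    then show "0 \<le> \<Phi> V x" "\<Phi> V x \<le> 1" unfolding \<Phi>_def by auto
    assume pos: "\<Phi> V x > 0"
    then have "(\<Sum>p\<in>{p\<in>C. VV p = V}. 1 - \<Psi> p x) \<noteq> 0" unfolding \<Phi>_def by auto
    then have "\<not> (\<forall>p\<in>{p\<in>C. VV p = V}. 1 - \<Psi> p x = 0)" using sum.neutral[of "{p\<in>C. VV p = V}" "\<lambda>p. 1 - \<Psi> p x"] by blast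
    then obtain p where p: "p \<in> C" "VV p = V" "1 - \<Psi> p x \<noteq> 0" by blast
    show "x \<in> Q V"
    proof (rule ccontr)
      assume "x \<notin> Q V"
      then have "\<Psi> p x = 1" using PS[of p] p C x by auto
      then show False using p by simp
    qed
  qed
  moreover have "\<forall>x\<in>topspace X. \<exists>V\<in>\<V>. \<Phi> V x = 1"
  proof
    fix x assume x: "x \<in> topspace X"
    then obtain p where p: "p \<in> C" "\<Psi> p x < 1/2" using C unfolding Ob_def by blast
    let ?V = "VV p"
    have "1 - \<Psi> p x \<le> (\<Sum>q\<in>{q\<in>C. VV q = ?V}. 1 - \<Psi> q x)"
      using C rng x p by (intro member_le_sum) auto
    then have "\<Phi> ?V x = 1" unfolding \<Phi>_def using p by auto
    moreover have "?V \<in> \<V>" using PS p C by blast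
    ultimately show "\<exists>V\<in>\<V>. \<Phi> V x = 1" by blast
  qed
  ultimately show ?thesis by blast
qed



lemma closedin_family:
  assumes "\<forall>V\<in>S. closedin X {x\<in>topspace X. Pr V x}"
  shows "closedin X {x\<in>topspace X. \<forall>V\<in>S. Pr V x}"
proof (cases "S = {}")
  case True
  then show ?thesis by simp
next
  case False
  have "{x\<in>topspace X. \<forall>V\<in>S. Pr V x} = \<Inter>((\<lambda>V. {x\<in>topspace X. Pr V x}) ` S)"
    using False by auto
  moreover have "closedin X (\<Inter>((\<lambda>V. {x\<in>topspace X. Pr V x}) ` S))"
    by (rule closedin_Inter) (use False assms in auto)
  ultimately show ?thesis by simp
qed

lemma closedin_ge:
  "continuous_map X euclideanreal \<phi> \<Longrightarrow> closedin X {x\<in>topspace X. a \<le> \<phi> x}"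
  using closedin_continuous_map_preimage[of X euclideanreal \<phi> "{a..}"] by simp

lemma closedin_le:
  "continuous_map X euclideanreal \<phi> \<Longrightarrow> closedin X {x\<in>topspace X. \<phi> x \<le> a}"
  using closedin_continuous_map_preimage[of X euclideanreal \<phi> "{..a}"] by simp

theorem lemma3p3:
  fixes X :: "'a topology" and Y :: "'b topology" and Z :: "'c topology"
    and g :: "'b \<Rightarrow> 'c"
  assumes X_compactum: "compact_space X" "Hausdorff_space X"
    and tych: "tychonoff_space X" "tychonoff_space Y" "tychonoff_space Z"
    and Z_para: "paracompact_space Z"
    and Z_dim: "\<And>K. compactin Z K \<Longrightarrow> finite_covering_dim (subtopology Z K)"
    and g_map: "continuous_map Y Z g"
    and g_surj: "g ` topspace Y = topspace Z"
    and g_AE: "\<And>z U. z \<in> topspace Z \<Longrightarrow> openin Z U \<Longrightarrow> z \<in> U \<Longrightarrow>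
         \<exists>V. openin Z V \<and> z \<in> V \<and> V \<subseteq> U \<and>
             AE_for (subtopology Y {y \<in> topspace Y. g y \<in> V}) X"
  shows "\<forall>\<omega> f. (\<forall>W\<in>\<omega>. openin Z W) \<and> \<Union>\<omega> = topspace Z \<and> continuous_map X Z f \<longrightarrow>
           (\<exists>f'. continuous_map X Y f' \<and>
                 (\<forall>x\<in>topspace X. \<exists>W\<in>\<omega>. f x \<in> W \<and> g (f' x) \<in> W))"
proof (intro allI impI)
  fix \<omega> and f :: "'a \<Rightarrow> 'c"
  assume H: "(\<forall>W\<in>\<omega>. openin Z W) \<and> \<Union>\<omega> = topspace Z \<and> continuous_map X Z f"
  then have \<omega>o: "\<forall>W\<in>\<omega>. openin Z W" and \<omega>u: "\<Union>\<omega> = topspace Z" and fc: "continuous_map X Z f" by auto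
  have crX: "completely_regular_space X" and crZ: "completely_regular_space Z"
    using tych unfolding tychonoff_space_def by auto
  define K where "K = f ` topspace X"
  have Kc: "compactin Z K" unfolding K_def
    using image_compactin[OF _ fc] X_compactum(1) compact_space_def by blast
  have Kt: "K \<subseteq> topspace Z" using Kc compactin_subset_topspace by blast
  have fK: "f x \<in> K" if "x \<in> topspace X" for x using that unfolding K_def by blast
  obtain n where dim: "covering_dim_le (subtopology Z K) n"
    using Z_dim[OF Kc] unfolding finite_covering_dim_def by blast
  define P where "P V = AE_for (subtopology Y {y \<in> topspace Y. g y \<in> V}) X" for V
  have good: "\<exists>V. P V \<and> openin Z V \<and> z \<in> V \<and> V \<subseteq> U" if "z \<in> K" "openin Z U" "z \<in> U" for z U
    using g_AE[of z U] that Kt unfolding P_def by blast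
  have om: "\<forall>z\<in>K. \<exists>W\<in>\<omega>. z \<in> W" using \<omega>u Kt by blast
  obtain d e G where dpm: "cpm Z d" and e: "e > 0"
    and G1: "\<forall>r<Suc n. \<forall>a\<in>K. P (G r a) \<and> openin Z (G r a) \<and> (\<exists>W\<in>\<omega>. G r a \<subseteq> W) \<and>
        (\<forall>z\<in>topspace Z. d a z < e \<longrightarrow> z \<in> G r a)"
    and G2: "\<forall>r r' a a'. r' < r \<and> r < Suc n \<and> a \<in> K \<and> a' \<in> K \<and> d a a' < e \<longrightarrow> G r' a' \<subseteq> G r a"
    using data_lemma[where P=P and L="Suc n", OF crZ Kc good om \<omega>o] by blast
  define Bl where "Bl c = {z\<in>topspace Z. d c z < e/2}" for c
  have "\<exists>\<F>. finite \<F> \<and> \<F> \<subseteq> Bl ` K \<and> K \<subseteq> \<Union>\<F>"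
  proof (rule compactinD[OF Kc])
    show "openin Z U" if "U \<in> Bl ` K" for U using that cpm_ball_open[OF dpm, of _ "e/2"] unfolding Bl_def by blast
    show "K \<subseteq> \<Union> (Bl ` K)"
    proof
      fix z assume "z \<in> K"
      then have "z \<in> Bl z" using Kt e dpm unfolding Bl_def cpm_def by auto
      then show "z \<in> \<Union> (Bl ` K)" using \<open>z \<in> K\<close> by blast
    qed
  qed
  then obtain C where C: "finite C" "C \<subseteq> K" "K \<subseteq> \<Union>(Bl ` C)"
    by (metis finite_subset_image)
  define \<U> where "\<U> = (\<lambda>c. Bl c \<inter> K) ` C"
  have tsK: "topspace (subtopology Z K) = K" using Kt by auto
  have "finite \<U> \<and> (\<forall>U\<in>\<U>. openin (subtopology Z K) U) \<and> \<Union>\<U> = topspace (subtopology Z K)"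
  proof (intro conjI)
    show "finite \<U>" unfolding \<U>_def using C by simp
    show "\<forall>U\<in>\<U>. openin (subtopology Z K) U" unfolding \<U>_def Bl_def
      using cpm_ball_open[OF dpm] openin_subtopology_Int by blast
    show "\<Union>\<U> = topspace (subtopology Z K)" unfolding tsK \<U>_def using C by blast
  qed
  note dim' = dim[unfolded covering_dim_le_def, THEN spec, THEN mp, OF this]
  then obtain \<V> where VV: "finite \<V> \<and> (\<forall>V\<in>\<V>. openin (subtopology Z K) V) \<and>
    \<Union>\<V> = topspace (subtopology Z K) \<and> (\<forall>V\<in>\<V>. \<exists>U\<in>\<U>. V \<subseteq> U) \<and>
    (\<forall>z\<in>topspace (subtopology Z K). card {V\<in>\<V>. z \<in> V} \<le> Suc n)"
    by (rule exE)
  have Vfin: "finite \<V>" using VV by blast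
  have Vop: "\<forall>V\<in>\<V>. openin (subtopology Z K) V" using VV by blast
  have Vcov: "\<Union>\<V> = topspace (subtopology Z K)" using VV by blast
  have Vref: "\<forall>V\<in>\<V>. \<exists>U\<in>\<U>. V \<subseteq> U" using VV by blast
  have Vord: "\<forall>z\<in>topspace (subtopology Z K). card {V\<in>\<V>. z \<in> V} \<le> Suc n" using VV by blast
  have "\<forall>V\<in>\<V>. \<exists>c. c \<in> C \<and> V \<subseteq> Bl c" using Vref unfolding \<U>_def by blast
  then obtain cen where cen: "\<And>V. V \<in> \<V> \<Longrightarrow> cen V \<in> C \<and> V \<subseteq> Bl (cen V)"
    by (auto dest!: bchoice)
  define Q where "Q V = {x\<in>topspace X. f x \<in> V}" for V
  have Qop: "\<forall>V\<in>\<V>. openin X (Q V)"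
  proof
    fix V assume "V \<in> \<V>"
    then obtain U where U: "openin Z U" "V = U \<inter> K" using Vop openin_subtopology by metis
    then have "Q V = {x\<in>topspace X. f x \<in> U}" unfolding Q_def using fK by auto
    then show "openin X (Q V)" using openin_continuous_map_preimage[OF fc U(1)] by simp
  qed
  have Qcov: "topspace X \<subseteq> (\<Union>V\<in>\<V>. Q V)"
  proof
    fix x assume x: "x \<in> topspace X"
    then have "f x \<in> \<Union>\<V>" using Vcov tsK fK by simp
    then show "x \<in> (\<Union>V\<in>\<V>. Q V)" using x unfolding Q_def by blast
  qed
  obtain \<Phi> where Phi1: "\<forall>V\<in>\<V>. continuous_map X euclideanreal (\<Phi> V) \<and>
            (\<forall>x\<in>topspace X. 0 \<le> \<Phi> V x \<and> \<Phi> V x \<le> 1 \<and> (\<Phi> V x > 0 \<longrightarrow> x \<in> Q V))"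
    and Phi2: "\<forall>x\<in>topspace X. \<exists>V\<in>\<V>. \<Phi> V x = 1"
    using phi_lemma[OF crX X_compactum(1) Vfin Qop Qcov] by blast
  define I where "I = {p. fst p \<in> {1..Suc n} \<and> snd p \<in> Pow \<V> \<and> snd p \<noteq> {}}"
  define A where "A p = {x\<in>topspace X. (\<forall>V\<in>snd p. (real (fst p) + 1) / (real n + 2) \<le> \<Phi> V x)
       \<and> (\<forall>V\<in>\<V> - snd p. \<Phi> V x \<le> real (fst p) / (real n + 2))}" for p
  define rep where "rep p = (SOME V. V \<in> snd p)" for p :: "nat \<times> 'c set set"
  define Vg where "Vg p = G (fst p - 1) (cen (rep p))" for p
  have Ifin: "finite I"
  proof -
    have "I \<subseteq> {1..Suc n} \<times> Pow \<V>" unfolding I_def by auto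
    then show ?thesis by (rule finite_subset) (simp add: Vfin)
  qed
  have rep: "rep p \<in> snd p" "rep p \<in> \<V>" if "p \<in> I" for p
  proof -
    show "rep p \<in> snd p" using that unfolding I_def rep_def by (simp add: some_in_eq)
    then show "rep p \<in> \<V>" using that unfolding I_def by auto
  qed
  have inA: "f x \<in> Bl (cen (rep p)) \<and> cen (rep p) \<in> K" if "p \<in> I" "x \<in> A p" for p x
  proof -
    have x: "x \<in> topspace X" using that unfolding A_def by simp
    have "(real (fst p) + 1) / (real n + 2) \<le> \<Phi> (rep p) x" using that rep unfolding A_def by blast
    moreover have "(real (fst p) + 1) / (real n + 2) > 0" by simp
    ultimately have "\<Phi> (rep p) x > 0" by linarith
    then have "x \<in> Q (rep p)" using Phi1 rep[OF that(1)] x by blast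
    then have "f x \<in> rep p" unfolding Q_def by simp
    then show ?thesis using cen[OF rep(2)[OF that(1)]] C by blast
  qed
  have "\<exists>h. continuous_map X Y h \<and> (\<forall>x\<in>topspace X. \<exists>i\<in>I. x \<in> A i \<and> g (h x) \<in> Vg i)"
  proof (rule extension_lemma[where lev=fst, OF Ifin])
    show "\<forall>i\<in>I. closedin X (A i)"
    proof
      fix p assume p: "p \<in> I"
      have c1: "closedin X {x\<in>topspace X. \<forall>V\<in>snd p. (real (fst p) + 1) / (real n + 2) \<le> \<Phi> V x}"
        using p Phi1 unfolding I_def by (intro closedin_family ballI closedin_ge) auto
      have c2: "closedin X {x\<in>topspace X. \<forall>V\<in>\<V> - snd p. \<Phi> V x \<le> real (fst p) / (real n + 2)}"
        using p Phi1 by (intro closedin_family ballI closedin_le) auto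
      have "A p = {x\<in>topspace X. \<forall>V\<in>snd p. (real (fst p) + 1) / (real n + 2) \<le> \<Phi> V x} \<inter>
                  {x\<in>topspace X. \<forall>V\<in>\<V> - snd p. \<Phi> V x \<le> real (fst p) / (real n + 2)}"
        unfolding A_def by auto
      then show "closedin X (A p)" using c1 c2 by auto
    qed
    show "topspace X \<subseteq> (\<Union>i\<in>I. A i)"
    proof
      fix x assume x: "x \<in> topspace X"
      obtain v0 where v0: "v0 \<in> \<V>" "\<Phi> v0 x = 1" using Phi2 x by blast
      have sub: "{V\<in>\<V>. \<Phi> V x > 0} \<subseteq> {V\<in>\<V>. f x \<in> V}" using Phi1 x unfolding Q_def by auto
      have "card {V\<in>\<V>. \<Phi> V x > 0} \<le> card {V\<in>\<V>. f x \<in> V}"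
        using card_mono[OF _ sub] Vfin by simp
      also have "\<dots> \<le> Suc n" using Vord fK[OF x] tsK by simp
      finally have crd: "card {V\<in>\<V>. \<Phi> V x > 0} \<le> Suc n" .
      have rng: "\<forall>v\<in>\<V>. 0 \<le> \<Phi> v x \<and> \<Phi> v x \<le> 1" using Phi1 x by blast
      obtain r \<sigma> where r: "r \<in> {1..Suc n}" "\<sigma> \<subseteq> \<V>" "\<sigma> \<noteq> {}"
        "\<forall>v\<in>\<sigma>. (real r + 1) / (real n + 2) \<le> \<Phi> v x" "\<forall>v\<in>\<V>-\<sigma>. \<Phi> v x \<le> real r / (real n + 2)"
        using pigeon[of \<V> "\<lambda>V. \<Phi> V x" n v0, OF Vfin rng crd v0] by blast
      then have "(r, \<sigma>) \<in> I" "x \<in> A (r, \<sigma>)" unfolding I_def A_def using x by auto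
      then show "x \<in> (\<Union>i\<in>I. A i)" by blast
    qed
    show "\<forall>i\<in>I. AE_for (subtopology Y {y \<in> topspace Y. g y \<in> Vg i}) X"
    proof
      fix p assume p: "p \<in> I"
      then have "fst p - 1 < Suc n" unfolding I_def by auto
      moreover have "cen (rep p) \<in> K" using cen rep[OF p] C by blast
      ultimately show "AE_for (subtopology Y {y \<in> topspace Y. g y \<in> Vg p}) X"
        using G1 unfolding Vg_def P_def by blast
    qed
    show "\<forall>i\<in>I. \<forall>j\<in>I. fst i < fst j \<and> A i \<inter> A j \<noteq> {} \<longrightarrow> Vg i \<subseteq> Vg j"
    proof (intro ballI impI)
      fix i j assume ij: "i \<in> I" "j \<in> I" "fst i < fst j \<and> A i \<inter> A j \<noteq> {}"
      then obtain x where x: "x \<in> A i" "x \<in> A j" by blast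
      have a: "f x \<in> Bl (cen (rep i))" "cen (rep i) \<in> K" using inA ij x by blast+
      have b: "f x \<in> Bl (cen (rep j))" "cen (rep j) \<in> K" using inA ij x by blast+
      have "d (cen (rep j)) (cen (rep i)) \<le> d (cen (rep j)) (f x) + d (f x) (cen (rep i))"
        using dpm unfolding cpm_def by blast
      moreover have "d (f x) (cen (rep i)) = d (cen (rep i)) (f x)" using dpm unfolding cpm_def by blast
      ultimately have "d (cen (rep j)) (cen (rep i)) < e" using a b unfolding Bl_def by auto
      moreover have "fst i - 1 < fst j - 1" "fst j - 1 < Suc n" using ij unfolding I_def by auto
      ultimately show "Vg i \<subseteq> Vg j" unfolding Vg_def using G2 a b by blast
    qed
    show "\<forall>i\<in>I. \<forall>j\<in>I. fst i = fst j \<and> i \<noteq> j \<longrightarrow> A i \<inter> A j = {}"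
    proof (intro ballI impI)
      fix i j assume ij: "i \<in> I" "j \<in> I" "fst i = fst j \<and> i \<noteq> j"
      then have sne: "snd i \<noteq> snd j" using prod_eqI by blast
      have ss: "snd i \<subseteq> \<V>" "snd j \<subseteq> \<V>" using ij unfolding I_def by auto
      have lt: "real (fst i) / (real n + 2) < (real (fst i) + 1) / (real n + 2)"
        by (simp add: divide_strict_right_mono)
      show "A i \<inter> A j = {}"
      proof (rule ccontr)
        assume "A i \<inter> A j \<noteq> {}"
        then obtain x where x: "x \<in> A i" "x \<in> A j" by blast
        from sne have "(\<exists>V. V \<in> snd i \<and> V \<notin> snd j) \<or> (\<exists>V. V \<in> snd j \<and> V \<notin> snd i)" by blast
        then show False
        proof
          assume "\<exists>V. V \<in> snd i \<and> V \<notin> snd j"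
          then obtain V where V: "V \<in> snd i" "V \<notin> snd j" by blast
          then have "(real (fst i) + 1) / (real n + 2) \<le> \<Phi> V x" "\<Phi> V x \<le> real (fst j) / (real n + 2)"
            using x ss unfolding A_def by auto
          then show False using lt ij by simp
        next
          assume "\<exists>V. V \<in> snd j \<and> V \<notin> snd i"
          then obtain V where V: "V \<in> snd j" "V \<notin> snd i" by blast
          then have "(real (fst j) + 1) / (real n + 2) \<le> \<Phi> V x" "\<Phi> V x \<le> real (fst i) / (real n + 2)"
            using x ss unfolding A_def by auto
          then show False using lt ij by simp
        qed
      qed
    qed
  qed
  then obtain h where hc: "continuous_map X Y h"
    and hp: "\<forall>x\<in>topspace X. \<exists>i\<in>I. x \<in> A i \<and> g (h x) \<in> Vg i" by blast
  have "\<forall>x\<in>topspace X. \<exists>W\<in>\<omega>. f x \<in> W \<and> g (h x) \<in> W"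
  proof
    fix x assume x: "x \<in> topspace X"
    then obtain i where i: "i \<in> I" "x \<in> A i" "g (h x) \<in> Vg i" using hp by blast
    have a: "f x \<in> Bl (cen (rep i))" "cen (rep i) \<in> K" using inA i by blast+
    have r: "fst i - 1 < Suc n" using i unfolding I_def by auto
    have G1': "(\<exists>W\<in>\<omega>. Vg i \<subseteq> W) \<and> (\<forall>z\<in>topspace Z. d (cen (rep i)) z < e \<longrightarrow> z \<in> Vg i)"
      using G1 r a(2) unfolding Vg_def by blast
    have "f x \<in> Vg i" using G1' a(1) e unfolding Bl_def by auto
    then show "\<exists>W\<in>\<omega>. f x \<in> W \<and> g (h x) \<in> W" using G1' i(3) by blast
  qed
  then show "\<exists>f'. continuous_map X Y f' \<and> (\<forall>x\<in>topspace X. \<exists>W\<in>\<omega>. f x \<in> W \<and> g (f' x) \<in> W)"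
    using hc by blast
qed

end
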